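(* Let $v\in\mathbb{M}\setminus\partial\mathbb{M}$ and $0<\epsilon<\infty$. Then there exists $w\in\partial\mathbb{M}$ with $d_{\mathrm{int}}(v,w)<\epsilon$ if and only if $\mathcal{T}_{2\epsilon}v\not\preceq Tv$.
   Context: Fix $\Lambda>0$ and an increasing homeomorphism $\varphi\colon[-\infty,\infty]\to[-\Lambda,\Lambda]$; for $s\in\mathbb{R}$ let $\rho_s\colon[-\Lambda,\Lambda]\to[-\Lambda,\Lambda]$, $\rho_s(t)=\varphi(s+\varphi^{-1}(t))$. Let $\mathbb{M}=\{(x,y)\in\mathbb{R}^2: -2\Lambda\le x+y\le2\Lambda\}$ with partial order $(x,y)\preceq(x',y')$ iff $x\ge x'$ and $y\le y'$, and boundary $\partial\mathbb{M}=\{|x+y|=2\Lambda\}$. Let $T\colon\mathbb{M}\to\mathbb{M}$, $T(x,y)=(-2\Lambda-y,2\Lambda-x)$. Put $S=(-\Lambda,\Lambda]\times[-\Lambda,\Lambda)$, $L=\{(x,y):x+y\ge-2\Lambda,\ x\le-\Lambda,\ y<\Lambda\}$, $A=\{(x,y):x+y\le2\Lambda,\ x>-\Lambda,\ y\ge\Lambda\}$; $\mathbb{M}$ is the disjoint union of the sets $T^k(S\sqcup L\sqcup A)$, $k\in\mathbb{Z}$. For $\epsilon\ge0$, $k\in\mathbb{Z}$, define $\mathcal{T}_\epsilon\colon\mathbb{M}\to\mathbb{M}$ by $\mathcal{T}_\epsilon(T^k(x,y))=T^k(\rho_{-\epsilon}(x),\rho_\epsilon(y))$ if $(x,y)\in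 S$; $=T^k(-2\Lambda-\rho_\epsilon(-2\Lambda-x),\rho_\epsilon(y))$ if $(x,y)\in L$; $=T^k(\rho_{-\epsilon}(x),2\Lambda-\rho_{-\epsilon}(2\Lambda-y))$ if $(x,y)\in A$. Let $d_{\mathrm{int}}(v,w)=\inf\{\epsilon>0: v\preceq\mathcal{T}_\epsilon w\text{ and }w\preceq\mathcal{T}_\epsilon v\}$ (infimum of empty set $=\infty$). *)

theory Defs
  imports "HOL-Analysis.Analysis"
begin

type_synonym pt = "real \<times> real"

text \<open>rho_s(t) = phi(s + phi^{-1}(t)); phi : [-inf,inf] -> [-Lambda,Lambda] as a function on ereal.\<close>
definition rho :: "(ereal \<Rightarrow> real) \<Rightarrow> real \<Rightarrow> real \<Rightarrow> real" where
  "rho \<phi> s t = \<phi> (ereal s + inv \<phi> t)"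

definition MM :: "real \<Rightarrow> pt set" where
  "MM \<Lambda> = {(x, y). -2*\<Lambda> \<le> x + y \<and> x + y \<le> 2*\<Lambda>}"

definition bdM :: "real \<Rightarrow> pt set" where
  "bdM \<Lambda> = {(x, y). \<bar>x + y\<bar> = 2*\<Lambda>}"

definition preceq :: "pt \<Rightarrow> pt \<Rightarrow> bool" where
  "preceq v w \<longleftrightarrow> fst v \<ge> fst w \<and> snd v \<le> snd w"

definition TT :: "real \<Rightarrow> pt \<Rightarrow> pt" where
  "TT \<Lambda> p = (-2*\<Lambda> - snd p, 2*\<Lambda> - fst p)"

definition TTinv :: "real \<Rightarrow> pt \<Rightarrow> pt" where
  "TTinv \<Lambda> p = (2*\<Lambda> - snd p, -2*\<Lambda> - fst p)"

definition Tpow :: "real \<Rightarrow> int \<Rightarrow> pt \<Rightarrow> pt" where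
  "Tpow \<Lambda> k = (if 0 \<le> k then TT \<Lambda> ^^ nat k else TTinv \<Lambda> ^^ nat (-k))"

definition SS :: "real \<Rightarrow> pt set" where
  "SS \<Lambda> = {-\<Lambda><..\<Lambda>} \<times> {-\<Lambda>..<\<Lambda>}"

definition LL :: "real \<Rightarrow> pt set" where
  "LL \<Lambda> = {(x, y). x + y \<ge> -2*\<Lambda> \<and> x \<le> -\<Lambda> \<and> y < \<Lambda>}"

definition AA :: "real \<Rightarrow> pt set" where
  "AA \<Lambda> = {(x, y). x + y \<le> 2*\<Lambda> \<and> x > -\<Lambda> \<and> y \<ge> \<Lambda>}"

text \<open>The map on the fundamental domain S \<union> L \<union> A.\<close>
definition base :: "real \<Rightarrow> (ereal \<Rightarrow> real) \<Rightarrow> real \<Rightarrow> pt \<Rightarrow> pt" where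
  "base \<Lambda> \<phi> \<epsilon> p =
    (let x = fst p; y = snd p in
     if p \<in> SS \<Lambda> then (rho \<phi> (-\<epsilon>) x, rho \<phi> \<epsilon> y)
     else if p \<in> LL \<Lambda> then (-2*\<Lambda> - rho \<phi> \<epsilon> (-2*\<Lambda> - x), rho \<phi> \<epsilon> y)
     else (rho \<phi> (-\<epsilon>) x, 2*\<Lambda> - rho \<phi> (-\<epsilon>) (2*\<Lambda> - y)))"

text \<open>calT_eps(T^k p) = T^k(base p) for p in S \<union> L \<union> A (the decomposition of M is disjoint).\<close>
definition calT :: "real \<Rightarrow> (ereal \<Rightarrow> real) \<Rightarrow> real \<Rightarrow> pt \<Rightarrow> pt" where
  "calT \<Lambda> \<phi> \<epsilon> v =
    (THE u. \<exists>k p. p \<in> SS \<Lambda> \<union> LL \<Lambda> \<union> AA \<Lambda> \<and> v = Tpow \<Lambda> k p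
                 \<and> u = Tpow \<Lambda> k (base \<Lambda> \<phi> \<epsilon> p))"

definition d_int :: "real \<Rightarrow> (ereal \<Rightarrow> real) \<Rightarrow> pt \<Rightarrow> pt \<Rightarrow> ereal" where
  "d_int \<Lambda> \<phi> v w = Inf {ereal e | e. e > 0 \<and> preceq v (calT \<Lambda> \<phi> e w) \<and> preceq w (calT \<Lambda> \<phi> e v)}"

end

theory Submission
  imports Defs
begin

lemma TT_funpow: "(TT L ^^ k) (x,y) = (if even k then (x - 2*real k*L, y + 2*real k*L)
   else (-2*L - y - 2*(real k - 1)*L, 2*L - x + 2*(real k - 1)*L))"
  by (induction k) (auto simp: TT_def algebra_simps)

lemma TTinv_funpow: "(TTinv L ^^ k) (x,y) = (if even k then (x + 2*real k*L, y - 2*real k*L)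
   else (2*L - y + 2*(real k - 1)*L, -2*L - x - 2*(real k - 1)*L))"
  by (induction k) (auto simp: TTinv_def algebra_simps)

definition Tf :: "real \<Rightarrow> int \<Rightarrow> pt \<Rightarrow> pt" where
  "Tf L n p = (if even n then (fst p - 2* of_int n*L, snd p + 2* of_int n*L)
   else (-2*L - snd p - 2*(of_int n - 1)*L, 2*L - fst p + 2*(of_int n - 1)*L))"

lemma Tpow_Tf: "Tpow L n p = Tf L n p"
proof (cases p)
  case (Pair x y)
  show ?thesis
  proof (cases "0 \<le> n")
    case True
    then obtain k where k: "n = int k" by (metis nonneg_eq_int)
    show ?thesis using True unfolding Pair Tpow_def Tf_def k
      by (simp add: TT_funpow)
  next
    case False
    then obtain k where k: "n = - int k" by (metis nonneg_eq_int neg_0_le_iff_le nle_le minus_minus)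
    show ?thesis using False unfolding Pair Tpow_def Tf_def k
      by (auto simp add: TTinv_funpow algebra_simps)
  qed
qed

lemma Tpow_comp: "Tpow L a (Tpow L b p) = Tpow L (a+b) p"
  unfolding Tpow_Tf Tf_def by (auto simp: algebra_simps)

lemma Tpow_0[simp]: "Tpow L 0 p = p"
  unfolding Tpow_Tf Tf_def by simp

lemma Tpow_1: "Tpow L 1 p = TT L p"
  unfolding Tpow_Tf Tf_def TT_def by simp

lemma Tpow_preceq: "preceq (Tpow L k a) (Tpow L k b) = preceq a b"
  unfolding Tpow_Tf Tf_def preceq_def by auto

lemma Tpow_sum: "fst (Tpow L k p) + snd (Tpow L k p) = (if even k then fst p + snd p else -(fst p + snd p))"
  unfolding Tpow_Tf Tf_def by auto

lemma Tpow_MM: "p \<in> MM L \<longleftrightarrow> Tpow L k p \<in> MM L"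
  using Tpow_sum[of L k p] unfolding MM_def by (cases p) (auto split: if_splits)

lemma Tpow_bdM: "p \<in> bdM L \<longleftrightarrow> Tpow L k p \<in> bdM L"
  using Tpow_sum[of L k p] unfolding bdM_def by (cases p) (auto split: if_splits)

lemma Tpow_xy: "Tpow L n (x,y) = (if even n then (x - 2*(of_int n * L), y + 2*(of_int n * L))
   else (- y - 2*(of_int n * L), - x + 2*(of_int n * L)))"
  unfolding Tpow_Tf Tf_def by (auto simp: algebra_simps)

abbreviation DD :: "real \<Rightarrow> pt set" where "DD L \<equiv> SS L \<union> LL L \<union> AA L"

lemma int_cases7:
  fixes n :: int and L t :: real assumes "L > 0" "t = of_int n * L"
  obtains "n \<le> -4" "t \<le> -4*L" | "n = -3" "t = -3*L" | "n = -2" "t = -2*L" | "n = -1" "t = -L"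
   | "n = 0" "t = 0" | "n = 1" "t = L" | "n = 2" "t = 2*L" | "n = 3" "t = 3*L"
   | "n \<ge> 4" "t \<ge> 4*L"
proof -
  consider "n \<le> -4" | "n = -3" | "n = -2" | "n = -1" | "n = 0" | "n = 1" | "n = 2" | "n = 3" | "n \<ge> 4" by linarith
  then show ?thesis
  proof cases
    case 1
    then have "of_int n \<le> (-4::real)" by simp
    then have "of_int n * L \<le> -4*L" using assms by (intro mult_right_mono) auto
    then show ?thesis using 1 that assms by auto
  next
    case 9
    then have "of_int n \<ge> (4::real)" by simp
    then have "of_int n * L \<ge> 4*L" using assms by (intro mult_right_mono) auto
    then show ?thesis using 9 that assms by auto
  qed (use that assms in auto)
qed

lemma Tpow_xyt: "t = of_int n * L \<Longrightarrow> Tpow L n (x,y) = (if even n then (x - 2*t, y + 2*t)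
   else (- y - 2*t, - x + 2*t))"
  by (simp add: Tpow_xy)

lemma DD_unique0:
  assumes L: "L > 0" and p: "p \<in> DD L" and q: "Tpow L n p \<in> DD L"
  shows "n = 0"
proof -
  obtain x y where pxy: "p = (x,y)" by (cases p)
  obtain t where t: "t = of_int n * L" by simp
  show ?thesis
    using int_cases7[OF L t] p q unfolding pxy Tpow_xyt[OF t] SS_def LL_def AA_def
    by cases (auto split: if_splits)
qed

lemma DD_unique:
  assumes L: "L > 0" and p: "p \<in> DD L" and q: "q \<in> DD L" and e: "Tpow L n p = Tpow L m q"
  shows "n = m \<and> p = q"
proof -
  have "Tpow L (-m) (Tpow L n p) = Tpow L (-m) (Tpow L m q)" using e by simp
  then have "Tpow L (n-m) p = q" by (simp add: Tpow_comp)
  then have "n - m = 0" using DD_unique0[OF L p, of "n-m"] q by simp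
  then show ?thesis using \<open>Tpow L (n-m) p = q\<close> by simp
qed

lemma DD_exists:
  assumes L: "L > 0" and v: "v \<in> MM L"
  shows "\<exists>k p. p \<in> DD L \<and> v = Tpow L k p"
proof -
  obtain x y where vxy: "v = (x,y)" by (cases v)
  define m where "m = \<lfloor>(y+L)/(4*L)\<rfloor>"
  define s where "s = of_int m * L"
  have f1: "of_int m \<le> (y+L)/(4*L)" unfolding m_def by linarith
  have f2: "(y+L)/(4*L) < of_int m + 1" unfolding m_def by linarith
  have g1: "4* s \<le> y + L" using f1 L unfolding s_def by (simp add: pos_le_divide_eq algebra_simps)
  have g2: "y + L < 4* s + 4*L" using f2 L unfolding s_def by (simp add: pos_divide_less_eq algebra_simps)
  define v' where "v' = Tpow L (-2*m) v"
  have v'eq: "v' = (x + 4* s, y - 4* s)" unfolding v'_def vxy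
    by (subst Tpow_xyt[of "-2 * s"]) (auto simp: s_def)
  have vback: "v = Tpow L (2*m - j) (Tpow L j v')" for j
    unfolding v'_def Tpow_comp by simp
  have vM: "-2*L \<le> x + y" "x + y \<le> 2*L" using v unfolding vxy MM_def by auto
  have "\<exists>j. Tpow L j v' \<in> DD L"
  proof -
    have T1: "Tpow L 1 v' = (-(y - 4* s) - 2*L, -(x+4* s) + 2*L)"
      unfolding v'eq by (subst Tpow_xyt[of L]) auto
    have Tm1: "Tpow L (-1) v' = (-(y - 4* s) + 2*L, -(x+4* s) - 2*L)"
      unfolding v'eq by (subst Tpow_xyt[of "-L"]) auto
    consider "y - 4* s < L" "x + 4* s \<le> -L" | "y - 4* s < L" "-L < x + 4* s" "x + 4* s \<le> L"
      | "y - 4* s < L" "x + 4* s > L" | "y - 4* s \<ge> L" "x + 4* s > -L"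
      | "y - 4* s \<ge> L" "x + 4* s \<le> -L" by linarith
    then show ?thesis
    proof cases
      case 1 then show ?thesis using vM g1 g2
        by (intro exI[of _ 0]) (auto simp: v'eq LL_def)
    next
      case 2 then show ?thesis using vM g1 g2
        by (intro exI[of _ 0]) (auto simp: v'eq SS_def)
    next
      case 3 then show ?thesis using vM g1 g2
        by (intro exI[of _ 1]) (auto simp: T1 LL_def)
    next
      case 4 then show ?thesis using vM g1 g2
        by (intro exI[of _ 0]) (auto simp: v'eq AA_def)
    next
      case 5 then show ?thesis using vM g1 g2
        by (intro exI[of _ "-1"]) (auto simp: Tm1 SS_def AA_def)
    qed
  qed
  then obtain j where "Tpow L j v' \<in> DD L" by blast
  then show ?thesis using vback[of j] by blast
qed

lemma calT_Tpow:
  assumes L: "L > 0" and p: "p \<in> DD L"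
  shows "calT L \<phi> e (Tpow L k p) = Tpow L k (base L \<phi> e p)"
  unfolding calT_def
proof (rule the_equality)
  show "\<exists>ka pa. pa \<in> DD L \<and> Tpow L k p = Tpow L ka pa \<and> Tpow L k (base L \<phi> e p) = Tpow L ka (base L \<phi> e pa)"
    using p by blast
next
  fix u assume "\<exists>ka pa. pa \<in> DD L \<and> Tpow L k p = Tpow L ka pa \<and> u = Tpow L ka (base L \<phi> e pa)"
  then obtain ka pa where "pa \<in> DD L" "Tpow L k p = Tpow L ka pa" "u = Tpow L ka (base L \<phi> e pa)" by blast
  then show "u = Tpow L k (base L \<phi> e p)" using DD_unique[OF L p] by metis
qed

locale phis =
  fixes L :: real and \<phi> :: "ereal \<Rightarrow> real" and \<psi> :: "real \<Rightarrow> ereal"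
  assumes L: "L > 0" and mono: "mono \<phi>" and hom: "homeomorphism UNIV {-L..L} \<phi> \<psi>"
begin

lemma phi_range: "-L \<le> \<phi> z" "\<phi> z \<le> L"
  using hom unfolding homeomorphism_def by auto

lemma psi_phi[simp]: "\<psi> (\<phi> z) = z"
  using hom unfolding homeomorphism_def by auto

lemma phi_psi: "-L \<le> t \<Longrightarrow> t \<le> L \<Longrightarrow> \<phi> (\<psi> t) = t"
  using hom unfolding homeomorphism_def by auto

lemma inj_phi: "inj \<phi>"
  by (metis injI psi_phi)

lemma inv_phi: "-L \<le> t \<Longrightarrow> t \<le> L \<Longrightarrow> inv \<phi> t = \<psi> t"
  by (metis inv_f_f inj_phi phi_psi)

lemma phi_le_iff: "\<phi> z \<le> \<phi> z' \<longleftrightarrow> z \<le> z'"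
  by (metis linorder_le_cases monoD mono order_antisym psi_phi)

lemma phi_less_iff: "\<phi> z < \<phi> z' \<longleftrightarrow> z < z'"
  by (meson linorder_not_le phi_le_iff)

lemma phi_top: "\<phi> \<infinity> = L"
proof -
  have "\<phi> (\<psi> L) \<le> \<phi> \<infinity>" unfolding phi_le_iff by simp
  then have "L \<le> \<phi> \<infinity>" using phi_psi[of L] L by simp
  then show ?thesis using phi_range[of "\<infinity>"] by simp
qed

lemma phi_bot: "\<phi> (-\<infinity>) = -L"
proof -
  have "\<phi> (-\<infinity>) \<le> \<phi> (\<psi> (-L))" unfolding phi_le_iff by simp
  then have "\<phi> (-\<infinity>) \<le> -L" using phi_psi[of "-L"] L by simp
  then show ?thesis using phi_range[of "-\<infinity>"] by simp
qed

lemma psi_le_iff: "-L \<le> t \<Longrightarrow> t \<le> L \<Longrightarrow> -L \<le> t' \<Longrightarrow> t' \<le> L \<Longrightarrow> \<psi> t \<le> \<psi> t' \<longleftrightarrow> t \<le> t'"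
  by (metis phi_le_iff phi_psi)

lemma psi_less_iff: "-L \<le> t \<Longrightarrow> t \<le> L \<Longrightarrow> -L \<le> t' \<Longrightarrow> t' \<le> L \<Longrightarrow> \<psi> t < \<psi> t' \<longleftrightarrow> t < t'"
  by (metis phi_less_iff phi_psi)

lemma psi_real: assumes "-L < t" "t < L" shows "\<psi> t = ereal (real_of_ereal (\<psi> t))"
proof -
  have "\<psi> t \<noteq> \<infinity>" using assms phi_psi[of t] phi_top by auto
  moreover have "\<psi> t \<noteq> -\<infinity>" using assms phi_psi[of t] phi_bot by auto
  ultimately show ?thesis by (cases "\<psi> t") auto
qed

definition R :: "real \<Rightarrow> real \<Rightarrow> real" where "R s t = \<phi> (ereal s + \<psi> t)"

lemma rho_R: "-L \<le> t \<Longrightarrow> t \<le> L \<Longrightarrow> rho \<phi> s t = R s t"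
  unfolding rho_def R_def by (simp add: inv_phi)

lemma R_range: "-L \<le> R s t" "R s t \<le> L"
  unfolding R_def using phi_range by auto

lemma R_comp: "-L \<le> t \<Longrightarrow> t \<le> L \<Longrightarrow> R s (R r t) = R (s+r) t"
  unfolding R_def by (simp add: add.assoc[symmetric])

lemma R_mono: "-L \<le> t \<Longrightarrow> t \<le> L \<Longrightarrow> -L \<le> t' \<Longrightarrow> t' \<le> L \<Longrightarrow> t \<le> t' \<Longrightarrow> R s t \<le> R s t'"
  unfolding R_def phi_le_iff by (intro add_left_mono) (simp add: psi_le_iff)

lemma R_mono_s: "s \<le> s' \<Longrightarrow> R s t \<le> R s' t"
  unfolding R_def phi_le_iff by (intro add_right_mono) simp

lemma R_0: "-L \<le> t \<Longrightarrow> t \<le> L \<Longrightarrow> R 0 t = t"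
  unfolding R_def by (simp add: phi_psi zero_ereal_def[symmetric])

lemma R_ge: "0 \<le> s \<Longrightarrow> -L \<le> t \<Longrightarrow> t \<le> L \<Longrightarrow> t \<le> R s t"
  using R_mono_s[of 0 s t] R_0 by simp

lemma R_le: "s \<le> 0 \<Longrightarrow> -L \<le> t \<Longrightarrow> t \<le> L \<Longrightarrow> R s t \<le> t"
  using R_mono_s[of s 0 t] R_0 by simp

lemma R_top: "R s L = L"
proof -
  have "\<psi> L = \<infinity>" by (metis phi_top psi_phi)
  then show ?thesis unfolding R_def by (simp add: phi_top)
qed

lemma R_bot: "R s (-L) = -L"
proof -
  have "\<psi> (-L) = -\<infinity>" by (metis phi_bot psi_phi)
  then show ?thesis unfolding R_def by (simp add: phi_bot)
qed

lemma R_real: "-L < t \<Longrightarrow> t < L \<Longrightarrow> R s t = \<phi> (ereal (s + real_of_ereal (\<psi> t)))"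
  unfolding R_def by (subst psi_real) auto

lemma phi_ereal_bounds: "-L < \<phi> (ereal a)" "\<phi> (ereal a) < L"
proof -
  show "-L < \<phi> (ereal a)" unfolding phi_bot[symmetric] phi_less_iff by simp
  show "\<phi> (ereal a) < L" unfolding phi_top[symmetric] phi_less_iff by simp
qed

lemma R_lt: "-L < t \<Longrightarrow> t < L \<Longrightarrow> R s t < L"
  using R_real phi_ereal_bounds by simp

lemma R_gt: "-L < t \<Longrightarrow> t < L \<Longrightarrow> -L < R s t"
  using R_real phi_ereal_bounds by simp

lemma R_lt': "-L \<le> t \<Longrightarrow> t < L \<Longrightarrow> R s t < L"
  by (metis R_bot R_lt L neg_less_0_iff_less order_le_less)

lemma R_gt': "-L < t \<Longrightarrow> t \<le> L \<Longrightarrow> -L < R s t"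
  by (metis R_top R_gt L neg_less_0_iff_less order_le_less less_trans)

lemma R_strict_s: "-L < t \<Longrightarrow> t < L \<Longrightarrow> s < s' \<Longrightarrow> R s t < R s' t"
  using R_real phi_less_iff by simp

end

context phis begin

lemma base_SS: "(x,y) \<in> SS L \<Longrightarrow> base L \<phi> e (x,y) = (R (-e) x, R e y)"
  unfolding base_def SS_def by (auto simp: rho_R)

lemma base_LL: "(x,y) \<in> LL L \<Longrightarrow> base L \<phi> e (x,y) = (-2*L - R e (-2*L - x), R e y)"
  unfolding base_def SS_def LL_def using L by (auto simp: rho_R)

lemma base_AA: "(x,y) \<in> AA L \<Longrightarrow> base L \<phi> e (x,y) = (R (-e) x, 2*L - R (-e) (2*L - y))"
  unfolding base_def SS_def LL_def AA_def using L by (auto simp: rho_R)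

lemma TT_xy: "TT L (x,y) = (-2*L - y, 2*L - x)" unfolding TT_def by simp

lemma lemmaA:
  assumes p: "p \<in> DD L" "p \<notin> bdM L" and e: "0 < e" "e < \<epsilon>"
    and q: "q \<in> DD L" "q \<in> bdM L"
    and c1: "preceq p (Tpow L n (base L \<phi> e q))" and c2: "preceq (Tpow L n q) (base L \<phi> e p)"
  shows "\<not> preceq (base L \<phi> (2*\<epsilon>) p) (TT L p)"
proof -
  obtain x y where pxy: "p = (x,y)" by (cases p)
  obtain a b where qab: "q = (a,b)" by (cases q)
  obtain t where t: "t = of_int n * L" by simp
  have qcases: "((a,b) \<in> LL L \<and> a = -2*L - b) \<or> ((a,b) \<in> AA L \<and> b = 2*L - a)"
    using q unfolding qab SS_def LL_def AA_def bdM_def by auto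
  have Tn: "Tpow L n (c,d) = (if even n then (c - 2*t, d + 2*t) else (- d - 2*t, - c + 2*t))" for c d
    using Tpow_xyt[OF t] .
  have tc: "(n \<le> -4 \<and> t \<le> -4*L) \<or> (n = -3 \<and> t = -3*L) \<or> (n = -2 \<and> t = -2*L) \<or> (n = -1 \<and> t = -L)
     \<or> (n = 0 \<and> t = 0) \<or> (n = 1 \<and> t = L) \<or> (n = 2 \<and> t = 2*L) \<or> (n = 3 \<and> t = 3*L) \<or> (n \<ge> 4 \<and> t \<ge> 4*L)"
    by (rule int_cases7[OF L t]) auto
  have pcases: "(x,y) \<in> SS L \<or> ((x,y) \<in> LL L \<and> x + y > -2*L) \<or> ((x,y) \<in> AA L \<and> x + y < 2*L)"
    using p unfolding pxy SS_def LL_def AA_def bdM_def by auto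
  from qcases show ?thesis
  proof
    assume qL: "(a,b) \<in> LL L \<and> a = -2*L - b"
    define Rq where "Rq = R e b"
    have bq: "-L \<le> b" "b < L" using qL unfolding LL_def by auto
    have Rqf: "b \<le> Rq" "Rq < L" "-L \<le> Rq" unfolding Rq_def using bq e R_ge R_lt' R_range by auto
    have bqe: "base L \<phi> e q = (-2*L - Rq, Rq)" unfolding qab Rq_def using base_LL[of a b e, OF conjunct1[OF qL]] conjunct2[OF qL] by simp
    note c1' = c1[unfolded bqe Tn preceq_def pxy]
    note c2' = c2[unfolded qab Tn preceq_def pxy]
    from pcases show ?thesis
    proof (elim disjE)
      assume pS: "(x,y) \<in> SS L"
      have bp: "base L \<phi> e (x,y) = (R (-e) x, R e y)" using base_SS[OF pS] .
      have f: "-L < x" "x \<le> L" "-L \<le> y" "y < L" using pS unfolding SS_def by auto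
      have g: "-L < R (-e) x" "R (-e) x \<le> x" "y \<le> R e y" "R e y < L" using f e R_gt' R_le R_ge R_lt' by auto
      show ?thesis using tc c1' c2'[unfolded bp] f g Rqf bq qL by (auto split: if_splits)
    next
      assume pL: "(x,y) \<in> LL L \<and> x + y > -2*L"
      define u where "u = -2*L - x"
      have bp: "base L \<phi> e (x,y) = (-2*L - R e u, R e y)" using base_LL pL u_def by simp
      have f: "-L \<le> u" "u < y" "y < L" using pL unfolding LL_def u_def by auto
      have g: "u \<le> R e u" "R e u < L" "y \<le> R e y" "R e y < L" using f e R_ge R_lt' by auto
      have n0: "n = 0" using tc c1' c2'[unfolded bp] f g Rqf bq u_def qL by (auto split: if_splits)
      then have t0: "t = 0" using t by simp
      have h1: "y \<le> Rq" using c1' n0 t0 by simp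
      have h2: "b \<le> R e u" using c2'[unfolded bp] n0 t0 qL by simp
      have "Rq \<le> R e (R e u)" unfolding Rq_def
        by (rule R_mono) (use h2 bq f R_range(2)[of e u] in linarith)+
      also have "\<dots> = R (e+e) u" by (rule R_comp) (use f in linarith)+
      also have "e + e = 2*e" by simp
      finally have h3: "y \<le> R (2*e) u" using h1 by simp
      have h4: "y < R (2*\<epsilon>) u"
      proof (cases "u = -L")
        case True
        then have "R (2*e) u = -L" using R_bot by simp
        then show ?thesis using h3 f True by linarith
      next
        case False
        then have "R (2*e) u < R (2*\<epsilon>) u" using f e by (intro R_strict_s) auto
        then show ?thesis using h3 by linarith
      qed
      show ?thesis unfolding pxy base_LL[OF conjunct1[OF pL]] TT_xy preceq_def u_def[symmetric]
        unfolding fst_conv snd_conv using h4 by linarith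
    next
      assume pA: "(x,y) \<in> AA L \<and> x + y < 2*L"
      define r where "r = 2*L - y"
      have bp: "base L \<phi> e (x,y) = (R (-e) x, 2*L - R (-e) r)" using base_AA pA r_def by simp
      have f: "-L < x" "x < r" "r \<le> L" using pA unfolding AA_def r_def by auto
      have g: "-L < R (-e) x" "R (-e) x \<le> x" "-L < R (-e) r" "R (-e) r \<le> r" using f e R_gt' R_le by auto
      show ?thesis using tc c1' c2'[unfolded bp] f g Rqf bq r_def qL by (auto split: if_splits)
    qed
  next
    assume qA: "(a,b) \<in> AA L \<and> b = 2*L - a"
    define Rq where "Rq = R (-e) a"
    have bq: "-L < a" "a \<le> L" using qA unfolding AA_def by auto
    have Rqf: "Rq \<le> a" "-L < Rq" "Rq \<le> L" unfolding Rq_def using bq e R_le R_gt' R_range by auto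
    have bqe: "base L \<phi> e q = (Rq, 2*L - Rq)" unfolding qab Rq_def
      using base_AA[of a b e, OF conjunct1[OF qA]] conjunct2[OF qA] by simp
    note c1' = c1[unfolded bqe Tn preceq_def pxy]
    note c2' = c2[unfolded qab Tn preceq_def pxy]
    from pcases show ?thesis
    proof (elim disjE)
      assume pS: "(x,y) \<in> SS L"
      have bp: "base L \<phi> e (x,y) = (R (-e) x, R e y)" using base_SS[OF pS] .
      have f: "-L < x" "x \<le> L" "-L \<le> y" "y < L" using pS unfolding SS_def by auto
      have g: "-L < R (-e) x" "R (-e) x \<le> x" "y \<le> R e y" "R e y < L" using f e R_gt' R_le R_ge R_lt' by auto
      show ?thesis using tc c1' c2'[unfolded bp] f g Rqf bq qA by (auto split: if_splits)
    next
      assume pL: "(x,y) \<in> LL L \<and> x + y > -2*L"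
      define u where "u = -2*L - x"
      have bp: "base L \<phi> e (x,y) = (-2*L - R e u, R e y)" using base_LL pL u_def by simp
      have f: "-L \<le> u" "u < y" "y < L" using pL unfolding LL_def u_def by auto
      have g: "u \<le> R e u" "R e u < L" "y \<le> R e y" "R e y < L" using f e R_ge R_lt' by auto
      show ?thesis using tc c1' c2'[unfolded bp] f g Rqf bq u_def qA by (auto split: if_splits)
    next
      assume pA: "(x,y) \<in> AA L \<and> x + y < 2*L"
      define r where "r = 2*L - y"
      have bp: "base L \<phi> e (x,y) = (R (-e) x, 2*L - R (-e) r)" using base_AA pA r_def by simp
      have f: "-L < x" "x < r" "r \<le> L" using pA unfolding AA_def r_def by auto
      have g: "-L < R (-e) x" "R (-e) x \<le> x" "-L < R (-e) r" "R (-e) r \<le> r" using f e R_gt' R_le by auto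
      have n0: "n = 0" using tc c1' c2'[unfolded bp] f g Rqf bq r_def qA by (auto split: if_splits)
      then have t0: "t = 0" using t by simp
      have h1: "Rq \<le> x" using c1' n0 t0 by simp
      have h2: "R (-e) r \<le> a" using c2'[unfolded bp] n0 t0 qA by simp
      have "R (-e) (R (-e) r) \<le> Rq" unfolding Rq_def
        by (rule R_mono) (use h2 bq f g R_range(2)[of "-e" r] in linarith)+
      moreover have "R (-e) (R (-e) r) = R (-e + -e) r" by (rule R_comp) (use f in linarith)+
      ultimately have h3: "R (-e + -e) r \<le> x" using h1 by linarith
      have h4: "R (-(2*\<epsilon>)) r < x"
      proof (cases "r = L")
        case True
        then have "R (-e + -e) r = L" using R_top by simp
        then show ?thesis using h3 f True by linarith
      next
        case False
        then have "R (-(2*\<epsilon>)) r < R (-e + -e) r" using f e by (intro R_strict_s) auto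
        then show ?thesis using h3 by linarith
      qed
      show ?thesis unfolding pxy base_AA[OF conjunct1[OF pA]] TT_xy preceq_def r_def[symmetric]
        unfolding fst_conv snd_conv using h4 by linarith
    qed
  qed
qed

lemma R_phi: "R s (\<phi> (ereal a)) = \<phi> (ereal (s + a))"
  unfolding R_def by simp

lemma phi_surj_real: assumes "-L < t" "t < L" obtains c where "t = \<phi> (ereal c)"
  using psi_real[OF assms] phi_psi[of t] assms by (metis less_imp_le)

lemma lemmaB:
  assumes p: "p \<in> DD L" "p \<notin> bdM L" and eps: "0 < \<epsilon>"
    and nc: "\<not> preceq (base L \<phi> (2*\<epsilon>) p) (TT L p)"
  shows "\<exists>h q. 0 < h \<and> h < \<epsilon> \<and> q \<in> DD L \<and> q \<in> bdM L \<and> preceq p (base L \<phi> h q) \<and> preceq q (base L \<phi> h p)"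
proof -
  obtain x y where pxy: "p = (x,y)" by (cases p)
  have pcases: "(x,y) \<in> SS L \<or> ((x,y) \<in> LL L \<and> x + y > -2*L) \<or> ((x,y) \<in> AA L \<and> x + y < 2*L)"
    using p unfolding pxy SS_def LL_def AA_def bdM_def by auto
  then show ?thesis
  proof (elim disjE)
    assume pS: "(x,y) \<in> SS L"
    have f: "-L < x" "x \<le> L" "-L \<le> y" "y < L" using pS unfolding SS_def by auto
    have "preceq (base L \<phi> (2*\<epsilon>) p) (TT L p)"
      unfolding pxy base_SS[OF pS] TT_xy preceq_def fst_conv snd_conv
      using R_range[of "-(2*\<epsilon>)" x] R_range[of "2*\<epsilon>" y] f by linarith
    then show ?thesis using nc by simp
  next
    assume pL: "(x,y) \<in> LL L \<and> x + y > -2*L"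
    define u where "u = -2*L - x"
    have f: "-L \<le> u" "u < y" "y < L" "x \<le> -L" using pL unfolding LL_def u_def by auto
    have "\<not> (-2*L - y \<le> -2*L - R (2*\<epsilon>) u \<and> R (2*\<epsilon>) y \<le> 2*L - x)"
      using nc unfolding pxy base_LL[OF conjunct1[OF pL]] TT_xy preceq_def fst_conv snd_conv u_def[symmetric] .
    then have lt: "y < R (2*\<epsilon>) u" using R_range[of "2*\<epsilon>" y] f by linarith
    have un: "u \<noteq> -L" using lt R_bot f by auto
    obtain c where c: "u = \<phi> (ereal c)" using phi_surj_real[of u] f un by (metis le_less less_trans)
    obtain b where b: "y = \<phi> (ereal b)" using phi_surj_real[of y] f by (metis le_less_trans less_trans)
    have cb: "c < b" using f(2) unfolding c b phi_less_iff by simp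
    have bc: "b < 2*\<epsilon> + c" using lt unfolding c b R_phi phi_less_iff by simp
    define h where "h = (b - c)/2"
    define w0 where "w0 = \<phi> (ereal ((b+c)/2))"
    have w0b: "-L < w0" "w0 < L" unfolding w0_def using phi_ereal_bounds by auto
    define q where "q = (-2*L - w0, w0)"
    have qL: "q \<in> LL L" unfolding q_def LL_def using w0b by auto
    have qb: "q \<in> bdM L" unfolding q_def bdM_def using L by auto
    have bq: "base L \<phi> h q = (-2*L - y, y)"
    proof -
      have "R h w0 = y" unfolding w0_def R_phi b h_def by (simp add: field_simps)
      then show ?thesis using base_LL[of "-2*L - w0" w0 h] qL unfolding q_def by simp
    qed
    have bp: "base L \<phi> h p = (-2*L - w0, R h y)"
    proof -
      have "R h u = w0" unfolding w0_def R_phi c h_def by (simp add: field_simps)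
      then show ?thesis using base_LL[OF conjunct1[OF pL], of h] unfolding pxy u_def by simp
    qed
    have w0y: "w0 \<le> R h y"
    proof -
      have "w0 \<le> y" unfolding w0_def b phi_le_iff using cb by simp
      also have "y \<le> R h y" using f cb h_def by (intro R_ge) auto
      finally show ?thesis .
    qed
    show ?thesis
    proof (intro exI conjI)
      show "0 < h" "h < \<epsilon>" using cb bc h_def by auto
      show "q \<in> DD L" using qL by simp
      show "q \<in> bdM L" by (rule qb)
      show "preceq p (base L \<phi> h q)" unfolding bq pxy preceq_def using f u_def by simp
      show "preceq q (base L \<phi> h p)" unfolding bp q_def preceq_def using w0y by simp
    qed
  next
    assume pA: "(x,y) \<in> AA L \<and> x + y < 2*L"
    define r where "r = 2*L - y"
    have f: "-L < x" "x < r" "r \<le> L" "L \<le> y" using pA unfolding AA_def r_def by auto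
    have "\<not> (-2*L - y \<le> R (-(2*\<epsilon>)) x \<and> 2*L - R (-(2*\<epsilon>)) r \<le> 2*L - x)"
      using nc unfolding pxy base_AA[OF conjunct1[OF pA]] TT_xy preceq_def fst_conv snd_conv r_def[symmetric] .
    then have lt: "R (-(2*\<epsilon>)) r < x" using R_range[of "-(2*\<epsilon>)" x] f by linarith
    have rn: "r \<noteq> L" using lt R_top f by auto
    obtain c where c: "x = \<phi> (ereal c)" using phi_surj_real[of x] f by (metis less_le_trans)
    obtain b where b: "r = \<phi> (ereal b)" using phi_surj_real[of r] f rn by (metis le_less less_trans)
    have cb: "c < b" using f(2) unfolding c b phi_less_iff by simp
    have bc: "-(2*\<epsilon>) + b < c" using lt unfolding c b R_phi phi_less_iff by simp
    define h where "h = (b - c)/2"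
    define w0 where "w0 = \<phi> (ereal ((b+c)/2))"
    have w0b: "-L < w0" "w0 < L" unfolding w0_def using phi_ereal_bounds by auto
    define q where "q = (w0, 2*L - w0)"
    have qA: "q \<in> AA L" unfolding q_def AA_def using w0b by auto
    have qb: "q \<in> bdM L" unfolding q_def bdM_def using L by auto
    have bq: "base L \<phi> h q = (x, 2*L - x)"
    proof -
      have "R (-h) w0 = x" unfolding w0_def R_phi c h_def by (simp add: field_simps)
      then show ?thesis using base_AA[of w0 "2*L - w0" h] qA unfolding q_def by simp
    qed
    have bp: "base L \<phi> h p = (R (-h) x, 2*L - w0)"
    proof -
      have "R (-h) r = w0" unfolding w0_def R_phi b h_def by (simp add: field_simps)
      then show ?thesis using base_AA[OF conjunct1[OF pA], of h] unfolding pxy r_def by simp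
    qed
    have w0x: "R (-h) x \<le> w0"
    proof -
      have "R (-h) x \<le> x" using f cb h_def by (intro R_le) auto
      also have "x \<le> w0" unfolding w0_def c phi_le_iff using cb by simp
      finally show ?thesis .
    qed
    show ?thesis
    proof (intro exI conjI)
      show "0 < h" "h < \<epsilon>" using cb bc h_def by auto
      show "q \<in> DD L" using qA by simp
      show "q \<in> bdM L" by (rule qb)
      show "preceq p (base L \<phi> h q)" unfolding bq pxy preceq_def using pA by simp
      show "preceq q (base L \<phi> h p)" unfolding bp q_def preceq_def using w0x by simp
    qed
  qed
qed

end

lemma bdM_MM: "w \<in> bdM L \<Longrightarrow> w \<in> MM L"
  unfolding bdM_def MM_def by (auto simp: abs_if split: if_splits)

theorem proposition7p5:
  fixes \<Lambda> :: real and \<phi> :: "ereal \<Rightarrow> real" and v :: "real \<times> real" and \<epsilon> :: real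
  assumes "\<Lambda> > 0"
    and "mono \<phi>"
    and "\<exists>\<psi>. homeomorphism UNIV {-\<Lambda>..\<Lambda>} \<phi> \<psi>"
    and "v \<in> MM \<Lambda>" and "v \<notin> bdM \<Lambda>"
    and "0 < \<epsilon>"
  shows "(\<exists>w \<in> bdM \<Lambda>. d_int \<Lambda> \<phi> v w < ereal \<epsilon>)
         \<longleftrightarrow> \<not> preceq (calT \<Lambda> \<phi> (2*\<epsilon>) v) (TT \<Lambda> v)"
proof -
  obtain \<psi> where hom: "homeomorphism UNIV {-\<Lambda>..\<Lambda>} \<phi> \<psi>" using assms(3) by blast
  interpret P: phis \<Lambda> \<phi> \<psi> using assms(1,2) hom by unfold_locales
  obtain k p where p: "p \<in> DD \<Lambda>" and vp: "v = Tpow \<Lambda> k p" using DD_exists[OF assms(1,4)] by blast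
  have pb: "p \<notin> bdM \<Lambda>" using assms(5) Tpow_bdM vp by blast
  have TTv: "TT \<Lambda> v = Tpow \<Lambda> k (TT \<Lambda> p)"
    unfolding vp Tpow_1[symmetric] Tpow_comp by (simp add: add.commute)
  have rhs: "preceq (calT \<Lambda> \<phi> (2*\<epsilon>) v) (TT \<Lambda> v) \<longleftrightarrow> preceq (base \<Lambda> \<phi> (2*\<epsilon>) p) (TT \<Lambda> p)"
    unfolding TTv unfolding vp calT_Tpow[OF assms(1) p] Tpow_preceq ..
  have shift: "Tpow \<Lambda> j z = Tpow \<Lambda> k (Tpow \<Lambda> (j - k) z)" for j z
    unfolding Tpow_comp by simp
  show ?thesis
  proof
    assume "\<exists>w \<in> bdM \<Lambda>. d_int \<Lambda> \<phi> v w < ereal \<epsilon>"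
    then obtain w where w: "w \<in> bdM \<Lambda>" and d: "d_int \<Lambda> \<phi> v w < ereal \<epsilon>" by blast
    then obtain z where z: "z \<in> {ereal e | e. e > 0 \<and> preceq v (calT \<Lambda> \<phi> e w) \<and> preceq w (calT \<Lambda> \<phi> e v)}"
      and zl: "z < ereal \<epsilon>"
      unfolding d_int_def by (auto simp: Inf_less_iff)
    then obtain e where e: "z = ereal e" "e > 0" "preceq v (calT \<Lambda> \<phi> e w)" "preceq w (calT \<Lambda> \<phi> e v)" by blast
    have ee: "e < \<epsilon>" using zl e by simp
    obtain j q where q: "q \<in> DD \<Lambda>" and wq: "w = Tpow \<Lambda> j q" using DD_exists[OF assms(1) bdM_MM[OF w]] by blast
    have qb: "q \<in> bdM \<Lambda>" using w Tpow_bdM wq by blast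
    have c1: "preceq p (Tpow \<Lambda> (j - k) (base \<Lambda> \<phi> e q))"
      using e(3)[unfolded vp wq calT_Tpow[OF assms(1) q]] unfolding shift[of j] Tpow_preceq .
    have c2: "preceq (Tpow \<Lambda> (j - k) q) (base \<Lambda> \<phi> e p)"
      using e(4)[unfolded vp wq calT_Tpow[OF assms(1) p]] unfolding shift[of j q] Tpow_preceq .
    show "\<not> preceq (calT \<Lambda> \<phi> (2*\<epsilon>) v) (TT \<Lambda> v)"
      unfolding rhs using P.lemmaA[OF p pb e(2) ee q qb c1 c2] .
  next
    assume "\<not> preceq (calT \<Lambda> \<phi> (2*\<epsilon>) v) (TT \<Lambda> v)"
    then have nc: "\<not> preceq (base \<Lambda> \<phi> (2*\<epsilon>) p) (TT \<Lambda> p)" unfolding rhs .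
    obtain h q where h: "0 < h" "h < \<epsilon>" and q: "q \<in> DD \<Lambda>" "q \<in> bdM \<Lambda>"
      and c1: "preceq p (base \<Lambda> \<phi> h q)" and c2: "preceq q (base \<Lambda> \<phi> h p)"
      using P.lemmaB[OF p pb assms(6) nc] by blast
    define w where "w = Tpow \<Lambda> k q"
    have wb: "w \<in> bdM \<Lambda>" using q Tpow_bdM w_def by blast
    have "ereal h \<in> {ereal e | e. e > 0 \<and> preceq v (calT \<Lambda> \<phi> e w) \<and> preceq w (calT \<Lambda> \<phi> e v)}"
      using h c1 c2 unfolding w_def vp calT_Tpow[OF assms(1) q(1)] calT_Tpow[OF assms(1) p] Tpow_preceq by blast
    then have "d_int \<Lambda> \<phi> v w \<le> ereal h" unfolding d_int_def by (rule Inf_lower)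
    also have "\<dots> < ereal \<epsilon>" using h by simp
    finally show "\<exists>w \<in> bdM \<Lambda>. d_int \<Lambda> \<phi> v w < ereal \<epsilon>" using wb by blast
  qed
qed

end
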